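(* Suppose $n$ is even and $T\in SO(n)$. Suppose the minimal polynomial of $T$ is a power of an irreducible quadratic polynomial over $\mathbb R$. Then $T$ is real in $SO(n)$ if and only if $n\not\equiv 2\pmod 4$.
   Context: An element $g$ of a group $G$ is real in $G$ if there is $h\in G$ with $hgh^{-1}=g^{-1}$. *)

theory Defs
  imports "Jordan_Normal_Form.Determinant" "HOL-Algebra.Group"
    "HOL-Computational_Algebra.Polynomial"
begin

definition SO_mats :: "nat \<Rightarrow> real mat set" where
  "SO_mats n = {A \<in> carrier_mat n n. A * transpose_mat A = 1\<^sub>m n \<and> det A = 1}"

definition SO_group :: "nat \<Rightarrow> real mat monoid" where
  "SO_group n = \<lparr>carrier = SO_mats n, mult = (*), one = 1\<^sub>m n\<rparr>"

definition real_in :: "('a, 'b) monoid_scheme \<Rightarrow> 'a \<Rightarrow> bool" where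
  "real_in G g \<longleftrightarrow> (\<exists>h \<in> carrier G. h \<otimes>\<^bsub>G\<^esub> g \<otimes>\<^bsub>G\<^esub> inv\<^bsub>G\<^esub> h = inv\<^bsub>G\<^esub> g)"

definition poly_mat :: "nat \<Rightarrow> 'a::comm_ring_1 poly \<Rightarrow> 'a mat \<Rightarrow> 'a mat" where
  "poly_mat n p A = foldr (\<lambda>c M. c \<cdot>\<^sub>m 1\<^sub>m n + A * M) (coeffs p) (0\<^sub>m n n)"

definition is_min_poly :: "nat \<Rightarrow> 'a::field mat \<Rightarrow> 'a poly \<Rightarrow> bool" where
  "is_min_poly n A p \<longleftrightarrow> lead_coeff p = 1 \<and> poly_mat n p A = 0\<^sub>m n n \<and>
     (\<forall>q. q \<noteq> 0 \<and> poly_mat n q A = 0\<^sub>m n n \<longrightarrow> degree p \<le> degree q)"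

end

theory Submission
  imports Defs
begin

lemma mult_cancel_aux: fixes A B C :: "'a::semiring_1 mat" shows "A \<in> carrier_mat n n \<Longrightarrow> B \<in> carrier_mat n n \<Longrightarrow> C \<in> carrier_mat n m
  \<Longrightarrow> A * B = 1\<^sub>m n \<Longrightarrow> A * (B * C) = C"
proof -
  assume a: "A \<in> carrier_mat n n" "B \<in> carrier_mat n n" "C \<in> carrier_mat n m" "A * B = 1\<^sub>m n"
  have "A * (B * C) = (A * B) * C" using assoc_mult_mat[OF a(1-3)] by simp
  then show ?thesis using a left_mult_one_mat[OF a(3)] by simp
qed

lemma SO_transpose:
  assumes "A \<in> SO_mats n" shows "transpose_mat A \<in> SO_mats n" "transpose_mat A * A = 1\<^sub>m n"
proof -
  have A: "A \<in> carrier_mat n n" "A * transpose_mat A = 1\<^sub>m n" "det A = 1" using assms by (auto simp: SO_mats_def)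
  show 1: "transpose_mat A * A = 1\<^sub>m n" using mat_mult_left_right_inverse[OF A(1) _ A(2)] A(1) by auto
  show "transpose_mat A \<in> SO_mats n" using A 1 det_transpose[OF A(1)] by (auto simp: SO_mats_def)
qed

lemma SO_group_group: "group (SO_group n)"
proof (rule groupI)
  fix x y assume "x \<in> carrier (SO_group n)" "y \<in> carrier (SO_group n)"
  then have x: "x \<in> carrier_mat n n" "x * transpose_mat x = 1\<^sub>m n" "det x = 1"
    and y: "y \<in> carrier_mat n n" "y * transpose_mat y = 1\<^sub>m n" "det y = 1"
    by (auto simp: SO_group_def SO_mats_def)
  have "(x * y) * transpose_mat (x * y) = x * (y * (transpose_mat y * transpose_mat x))"
    using x y by (simp add: transpose_mult assoc_mult_mat[of _ n n _ n _ n])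
  also have "\<dots> = x * transpose_mat x" using x y mult_cancel_aux[of y n "transpose_mat y" "transpose_mat x"] by simp
  also have "\<dots> = 1\<^sub>m n" using x by simp
  finally show "x \<otimes>\<^bsub>SO_group n\<^esub> y \<in> carrier (SO_group n)"
    using x y by (auto simp: SO_group_def SO_mats_def det_mult)
next
  show "\<one>\<^bsub>SO_group n\<^esub> \<in> carrier (SO_group n)" by (auto simp: SO_group_def SO_mats_def)
next
  fix x y z assume "x \<in> carrier (SO_group n)" "y \<in> carrier (SO_group n)" "z \<in> carrier (SO_group n)"
  then show "x \<otimes>\<^bsub>SO_group n\<^esub> y \<otimes>\<^bsub>SO_group n\<^esub> z = x \<otimes>\<^bsub>SO_group n\<^esub> (y \<otimes>\<^bsub>SO_group n\<^esub> z)"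
    by (auto simp: SO_group_def SO_mats_def assoc_mult_mat[of _ n n _ n _ n])
next
  fix x assume "x \<in> carrier (SO_group n)"
  then show "\<one>\<^bsub>SO_group n\<^esub> \<otimes>\<^bsub>SO_group n\<^esub> x = x" by (auto simp: SO_group_def SO_mats_def)
next
  fix x assume "x \<in> carrier (SO_group n)"
  then have "x \<in> SO_mats n" by (simp add: SO_group_def)
  then show "\<exists>y\<in>carrier (SO_group n). y \<otimes>\<^bsub>SO_group n\<^esub> x = \<one>\<^bsub>SO_group n\<^esub>"
    using SO_transpose[of x n] by (auto simp: SO_group_def)
qed

lemma SO_inv: assumes "A \<in> SO_mats n" shows "inv\<^bsub>SO_group n\<^esub> A = transpose_mat A"
proof -
  have 1: "transpose_mat A \<otimes>\<^bsub>SO_group n\<^esub> A = \<one>\<^bsub>SO_group n\<^esub>"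
    using SO_transpose(2)[OF assms] by (simp add: SO_group_def)
  have 2: "A \<in> carrier (SO_group n)" "transpose_mat A \<in> carrier (SO_group n)"
    using assms SO_transpose(1)[OF assms] by (simp_all add: SO_group_def)
  show ?thesis by (rule group.inv_equality[OF SO_group_group 1 2])
qed

lemma smult_zero_left_mat[simp]: "(0::real) \<cdot>\<^sub>m B = 0\<^sub>m (dim_row B) (dim_col B)"
  by (rule eq_matI) auto

lemma smult_one_left_mat[simp]: "(1::real) \<cdot>\<^sub>m B = B"
  by (rule eq_matI) auto

lemma poly_mat_0[simp]: "poly_mat n 0 A = 0\<^sub>m n n"
  by (simp add: poly_mat_def)

lemma poly_mat_pCons:
  fixes A :: "real mat" assumes A: "A \<in> carrier_mat n n"
  shows "poly_mat n (pCons a p) A = a \<cdot>\<^sub>m 1\<^sub>m n + A * poly_mat n p A"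
proof (cases "p = 0 \<and> a = 0")
  case True
  then show ?thesis using A by (simp add: poly_mat_def)
next
  case False
  then have "coeffs (pCons a p) = a # coeffs p"
    by (auto simp: coeffs_pCons_eq_cCons cCons_def)
  then show ?thesis by (simp add: poly_mat_def)
qed

lemma poly_mat_carrier[simp]:
  fixes A :: "real mat" assumes A: "A \<in> carrier_mat n n"
  shows "poly_mat n p A \<in> carrier_mat n n"
  by (induct p) (use A in \<open>auto simp: poly_mat_pCons\<close>)

lemma poly_mat_dims[simp]:
  fixes A :: "real mat" assumes A: "A \<in> carrier_mat n n"
  shows "dim_row (poly_mat n p A) = n" "dim_col (poly_mat n p A) = n"
  using poly_mat_carrier[OF A, of p] by auto

lemma poly_mat_add:
  fixes A :: "real mat" assumes A: "A \<in> carrier_mat n n"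
  shows "poly_mat n (p + q) A = poly_mat n p A + poly_mat n q A"
proof (induct p arbitrary: q)
  case 0
  then show ?case using A by simp
next
  case (pCons a p)
  obtain b q' where q: "q = pCons b q'" by (cases q) auto
  have "poly_mat n (pCons a p + q) A = (a + b) \<cdot>\<^sub>m 1\<^sub>m n + A * (poly_mat n p A + poly_mat n q' A)"
    using pCons A q by (simp add: poly_mat_pCons)
  also have "\<dots> = a \<cdot>\<^sub>m 1\<^sub>m n + b \<cdot>\<^sub>m 1\<^sub>m n + (A * poly_mat n p A + A * poly_mat n q' A)"
  proof -
    have e1: "(a+b) \<cdot>\<^sub>m 1\<^sub>m n = a \<cdot>\<^sub>m 1\<^sub>m n + b \<cdot>\<^sub>m 1\<^sub>m n" by (rule add_smult_distrib_right_mat) (rule one_carrier_mat)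
    have e2: "A * (poly_mat n p A + poly_mat n q' A) = A * poly_mat n p A + A * poly_mat n q' A"
      by (rule mult_add_distrib_mat[OF A poly_mat_carrier[OF A] poly_mat_carrier[OF A]])
    show ?thesis by (simp only: e1 e2)
  qed
  also have "\<dots> = poly_mat n (pCons a p) A + poly_mat n q A"
    using A q by (simp add: poly_mat_pCons) (rule eq_matI, auto)
  finally show ?case .
qed

lemma poly_mat_smult:
  fixes A :: "real mat" assumes A: "A \<in> carrier_mat n n"
  shows "poly_mat n (smult c p) A = c \<cdot>\<^sub>m poly_mat n p A"
proof (induct p)
  case 0
  then show ?case by simp
next
  case (pCons a p)
  have "poly_mat n (smult c (pCons a p)) A = (c * a) \<cdot>\<^sub>m 1\<^sub>m n + A * (c \<cdot>\<^sub>m poly_mat n p A)"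
    using pCons A by (simp add: poly_mat_pCons)
  also have "\<dots> = c \<cdot>\<^sub>m poly_mat n (pCons a p) A"
  proof -
    have e: "A * (c \<cdot>\<^sub>m poly_mat n p A) = c \<cdot>\<^sub>m (A * poly_mat n p A)"
      by (rule mult_smult_distrib[OF A poly_mat_carrier[OF A]])
    show ?thesis using A by (simp add: poly_mat_pCons e) (rule eq_matI, auto simp: algebra_simps)
  qed
  finally show ?case .
qed

lemma poly_mat_mult:
  fixes A :: "real mat" assumes A: "A \<in> carrier_mat n n"
  shows "poly_mat n (p * q) A = poly_mat n p A * poly_mat n q A"
proof (induct p)
  case 0
  then show ?case using A by (simp add: left_mult_zero_mat[of _ n n])
next
  case (pCons a p)
  let ?P = "poly_mat n p A" and ?Q = "poly_mat n q A"
  have "poly_mat n (pCons a p * q) A = poly_mat n (smult a q) A + poly_mat n (pCons 0 (p * q)) A"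
    by (simp add: poly_mat_add[OF A])
  also have "\<dots> = a \<cdot>\<^sub>m ?Q + A * (?P * ?Q)"
  proof -
    have c: "A * (?P * ?Q) \<in> carrier_mat n n"
      by (rule mult_carrier_mat[OF A mult_carrier_mat[OF poly_mat_carrier[OF A] poly_mat_carrier[OF A]]])
    show ?thesis using A pCons c by (simp add: poly_mat_smult poly_mat_pCons)
  qed
  also have "\<dots> = (a \<cdot>\<^sub>m 1\<^sub>m n + A * ?P) * ?Q"
  proof -
    have e1: "(a \<cdot>\<^sub>m 1\<^sub>m n + A * ?P) * ?Q = (a \<cdot>\<^sub>m 1\<^sub>m n) * ?Q + (A * ?P) * ?Q"
    proof -
      have c1: "a \<cdot>\<^sub>m 1\<^sub>m n \<in> carrier_mat n n" by simp
      have c2: "A * ?P \<in> carrier_mat n n" by (rule mult_carrier_mat[OF A poly_mat_carrier[OF A]])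
      show ?thesis by (rule add_mult_distrib_mat[OF c1 c2 poly_mat_carrier[OF A]])
    qed
    have e2: "(a \<cdot>\<^sub>m 1\<^sub>m n) * ?Q = a \<cdot>\<^sub>m (1\<^sub>m n * ?Q)"
      by (rule mult_smult_assoc_mat[OF one_carrier_mat poly_mat_carrier[OF A]])
    have e3: "A * ?P * ?Q = A * (?P * ?Q)" by (rule assoc_mult_mat[OF A poly_mat_carrier[OF A] poly_mat_carrier[OF A]])
    show ?thesis using A by (simp add: e1 e2 e3)
  qed
  also have "\<dots> = poly_mat n (pCons a p) A * ?Q" using A by (simp add: poly_mat_pCons)
  finally show ?case .
qed

lemma poly_mat_pow:
  fixes A :: "real mat" assumes A: "A \<in> carrier_mat n n"
  shows "poly_mat n (p ^ k) A = poly_mat n p A ^\<^sub>m k"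
proof (induct k)
  case 0
  have "poly_mat n 1 A = 1\<^sub>m n" using A by (simp add: poly_mat_def)
  then show ?case using A by simp
next
  case (Suc k)
  then show ?case using A by (simp add: poly_mat_mult power_Suc2 del: power_Suc)
qed

lemma mat_monoid: "monoid (ring_mat TYPE(real) n b)"
  using ring_mat[of n b] unfolding ring_def by auto

lemma pow_add_mat:
  fixes A :: "real mat" assumes A: "A \<in> carrier_mat n n"
  shows "A ^\<^sub>m a * A ^\<^sub>m b = A ^\<^sub>m (a + b)"
  using monoid.nat_pow_mult[OF mat_monoid[of n "()"], where x=A and n=a and m=b] A
  by (simp add: pow_mat_ring_pow[OF A, of _ "()"] ring_mat_simps)

lemma pow_mult_distrib_mat:
  fixes A B :: "real mat" assumes A: "A \<in> carrier_mat n n" and B: "B \<in> carrier_mat n n"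
    and AB: "A * B = B * A"
  shows "(A * B) ^\<^sub>m k = A ^\<^sub>m k * B ^\<^sub>m k"
proof -
  have AB': "A * B \<in> carrier_mat n n" using A B by simp
  have AB2: "A \<otimes>\<^bsub>ring_mat TYPE(real) n ()\<^esub> B = B \<otimes>\<^bsub>ring_mat TYPE(real) n ()\<^esub> A"
    unfolding ring_mat_simps by (rule AB)
  have "(A \<otimes>\<^bsub>ring_mat TYPE(real) n ()\<^esub> B) [^]\<^bsub>ring_mat TYPE(real) n ()\<^esub> k =
     A [^]\<^bsub>ring_mat TYPE(real) n ()\<^esub> k \<otimes>\<^bsub>ring_mat TYPE(real) n ()\<^esub> B [^]\<^bsub>ring_mat TYPE(real) n ()\<^esub> k"
    by (rule monoid.pow_mult_distrib[OF mat_monoid AB2]) (use A B in \<open>simp_all add: ring_mat_simps\<close>)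
  then show ?thesis
    unfolding ring_mat_simps pow_mat_ring_pow[OF A, of _ "()", symmetric] pow_mat_ring_pow[OF B, of _ "()", symmetric]
      pow_mat_ring_pow[OF AB', of _ "()", symmetric] .
qed

lemma pow_comm_mat:
  fixes A B :: "real mat" assumes A: "A \<in> carrier_mat n n" and B: "B \<in> carrier_mat n n"
    and AB: "A * B = B * A"
  shows "A ^\<^sub>m k * B = B * A ^\<^sub>m k"
proof -
  have AB2: "A \<otimes>\<^bsub>ring_mat TYPE(real) n ()\<^esub> B = B \<otimes>\<^bsub>ring_mat TYPE(real) n ()\<^esub> A"
    unfolding ring_mat_simps by (rule AB)
  have "A [^]\<^bsub>ring_mat TYPE(real) n ()\<^esub> k \<otimes>\<^bsub>ring_mat TYPE(real) n ()\<^esub> B = B \<otimes>\<^bsub>ring_mat TYPE(real) n ()\<^esub> A [^]\<^bsub>ring_mat TYPE(real) n ()\<^esub> k"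
    by (rule monoid.group_commutes_pow[OF mat_monoid AB2]) (use A B in \<open>simp_all add: ring_mat_simps\<close>)
  then show ?thesis
    unfolding ring_mat_simps pow_mat_ring_pow[OF A, of _ "()", symmetric] .
qed

lemma transpose_smult_mat: "transpose_mat (c \<cdot>\<^sub>m A) = c \<cdot>\<^sub>m transpose_mat A"
  by (rule eq_matI) auto

lemma transpose_pow_mat:
  fixes A :: "real mat" assumes A: "A \<in> carrier_mat n n"
  shows "transpose_mat (A ^\<^sub>m k) = (transpose_mat A) ^\<^sub>m k"
proof (induct k)
  case 0 then show ?case using A by simp
next
  case (Suc k)
  have "transpose_mat (A ^\<^sub>m Suc k) = transpose_mat A * transpose_mat (A ^\<^sub>m k)"
    using A by (simp add: transpose_mult[of _ n n _ n])
  also have "\<dots> = transpose_mat A * (transpose_mat A) ^\<^sub>m k" using Suc by simp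
  also have "\<dots> = (transpose_mat A) ^\<^sub>m k * transpose_mat A"
    using pow_comm_mat[of "transpose_mat A" n "transpose_mat A" k] A by simp
  finally show ?case by simp
qed

lemma poly_mat_comm:
  fixes A B :: "real mat" assumes A: "A \<in> carrier_mat n n" and B: "B \<in> carrier_mat n n"
    and AB: "A * B = B * A"
  shows "poly_mat n p A * B = B * poly_mat n p A"
proof (induct p)
  case 0 then show ?case using B by (simp add: left_mult_zero_mat[OF B] right_mult_zero_mat[OF B])
next
  case (pCons a p)
  let ?P = "poly_mat n p A"
  have P: "?P \<in> carrier_mat n n" using A by simp
  have AP: "A * ?P \<in> carrier_mat n n" using A P by simp
  have "(a \<cdot>\<^sub>m 1\<^sub>m n + A * ?P) * B = (a \<cdot>\<^sub>m 1\<^sub>m n) * B + (A * ?P) * B"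
    by (rule add_mult_distrib_mat[OF _ AP B]) simp
  also have "\<dots> = a \<cdot>\<^sub>m B + A * (B * ?P)"
    using A B P pCons by (simp add: mult_smult_assoc_mat[OF one_carrier_mat B] assoc_mult_mat[OF A P B])
  also have "\<dots> = a \<cdot>\<^sub>m B + B * (A * ?P)"
    using A B P AB by (simp add: assoc_mult_mat[OF A B P, symmetric] assoc_mult_mat[OF B A P, symmetric])
  also have "\<dots> = B * (a \<cdot>\<^sub>m 1\<^sub>m n) + B * (A * ?P)"
    using B by (simp add: mult_smult_distrib[OF B one_carrier_mat])
  also have "\<dots> = B * (a \<cdot>\<^sub>m 1\<^sub>m n + A * ?P)"
    by (rule mult_add_distrib_mat[OF B _ AP, symmetric]) simp
  finally show ?case using A by (simp add: poly_mat_pCons)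
qed

lemma poly_mat_transpose:
  fixes A :: "real mat" assumes A: "A \<in> carrier_mat n n"
  shows "transpose_mat (poly_mat n p A) = poly_mat n p (transpose_mat A)"
proof (induct p)
  case 0 then show ?case by simp
next
  case (pCons a p)
  let ?P = "poly_mat n p A" and ?At = "transpose_mat A"
  have At: "?At \<in> carrier_mat n n" using A by simp
  have P: "?P \<in> carrier_mat n n" using A by simp
  have AP: "A * ?P \<in> carrier_mat n n" using A P by simp
  have "transpose_mat (poly_mat n (pCons a p) A) = a \<cdot>\<^sub>m 1\<^sub>m n + transpose_mat ?P * ?At"
    using A P AP by (simp add: poly_mat_pCons transpose_add[of _ n n] transpose_smult_mat transpose_mult[OF A P])
  also have "\<dots> = a \<cdot>\<^sub>m 1\<^sub>m n + ?At * poly_mat n p ?At"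
    using pCons poly_mat_comm[OF At At refl, of p] by simp
  finally show ?case using At by (simp add: poly_mat_pCons)
qed

lemma AtA_zero:
  fixes A :: "real mat" assumes A: "A \<in> carrier_mat n n" and z: "transpose_mat A * A = 0\<^sub>m n n"
  shows "A = 0\<^sub>m n n"
proof (rule eq_matI)
  fix i j assume i: "i < dim_row (0\<^sub>m n n :: real mat)" and j: "j < dim_col (0\<^sub>m n n :: real mat)"
  have "(transpose_mat A * A) $$ (j,j) = 0" using z i j by simp
  then have "(\<Sum>l = 0..<n. A $$ (l,j) * A $$ (l,j)) = 0" using A i j by (simp add: scalar_prod_def)
  then have "\<forall>l\<in>{0..<n}. A $$ (l,j) * A $$ (l,j) = 0"
    by (subst sum_nonneg_eq_0_iff[symmetric]) auto
  then show "A $$ (i,j) = 0\<^sub>m n n $$ (i,j)" using i j by simp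
qed (use A in auto)

lemma sym_nilpotent:
  fixes S :: "real mat" assumes S: "S \<in> carrier_mat n n" and sym: "transpose_mat S = S"
  shows "S ^\<^sub>m k = 0\<^sub>m n n \<Longrightarrow> S = 0\<^sub>m n n"
proof (induct k rule: less_induct)
  case (less k)
  show ?case
  proof (cases "k \<le> 1")
    case True
    show ?thesis
    proof (cases "k = 0")
      case True
      with less.prems S have one: "1\<^sub>m n = (0\<^sub>m n n :: real mat)" by simp
      have "n = 0"
      proof (rule ccontr)
        assume "n \<noteq> 0"
        then have "(1\<^sub>m n :: real mat) $$ (0,0) = 0\<^sub>m n n $$ (0,0)" using one by simp
        then show False using \<open>n \<noteq> 0\<close> by simp
      qed
      then show ?thesis using S by (intro eq_matI) auto
    next
      case False
      with True have "k = 1" by simp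
      then show ?thesis using less.prems S by simp
    qed
  next
    case False
    define l where "l = (k + 1) div 2"
    have lk: "l < k" "k \<le> l + l" using False by (auto simp: l_def)
    have "transpose_mat (S ^\<^sub>m l) * S ^\<^sub>m l = S ^\<^sub>m (l + l)"
      using S sym by (simp add: transpose_pow_mat pow_add_mat)
    also have "\<dots> = S ^\<^sub>m k * S ^\<^sub>m (l + l - k)"
      using S lk pow_add_mat[OF S, of k "l + l - k"] by simp
    also have "\<dots> = 0\<^sub>m n n" using less.prems S by (simp add: left_mult_zero_mat[of _ n n])
    finally have "S ^\<^sub>m l = 0\<^sub>m n n" by (rule AtA_zero[rotated]) (use S in simp)
    then show ?thesis by (rule less.hyps[OF lk(1)])
  qed
qed

lemma normal_nilpotent:
  fixes N :: "real mat" assumes N: "N \<in> carrier_mat n n"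
    and nor: "N * transpose_mat N = transpose_mat N * N" and nil: "N ^\<^sub>m k = 0\<^sub>m n n"
  shows "N = 0\<^sub>m n n"
proof -
  let ?S = "transpose_mat N * N"
  have Nt: "transpose_mat N \<in> carrier_mat n n" using N by simp
  have S: "?S \<in> carrier_mat n n" using N by simp
  have sym: "transpose_mat ?S = ?S" using N by (simp add: transpose_mult[OF Nt N])
  have "?S ^\<^sub>m k = (transpose_mat N) ^\<^sub>m k * N ^\<^sub>m k"
    by (rule pow_mult_distrib_mat[OF Nt N nor[symmetric]])
  also have "\<dots> = 0\<^sub>m n n" using nil N by (simp add: right_mult_zero_mat[of _ n n])
  finally have "?S = 0\<^sub>m n n" by (rule sym_nilpotent[OF S sym])
  then show ?thesis by (rule AtA_zero[OF N])
qed

lemma irreducible_quadratic_no_root: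
  fixes q :: "real poly" assumes irr: "irreducible q" and deg: "degree q = 2"
  shows "poly q x \<noteq> 0"
proof
  assume "poly q x = 0"
  then obtain r where r: "q = [:-x, 1:] * r" by (auto simp: poly_eq_0_iff_dvd dvd_def)
  from irreducibleD[OF irr r] have "is_unit [:-x, 1:] \<or> is_unit r" .
  moreover have "\<not> is_unit [:-x, 1:]" by (simp add: is_unit_poly_iff)
  ultimately have "is_unit r" by simp
  then have "degree r = 0" by (auto simp: is_unit_poly_iff)
  moreover have "r \<noteq> 0" using r deg by auto
  ultimately have "degree q = 1" unfolding r by (subst degree_mult_eq) auto
  then show False using deg by simp
qed

lemma poly_mat_one: fixes A :: "real mat" assumes A: "A \<in> carrier_mat n n"
  shows "poly_mat n 1 A = 1\<^sub>m n"
  using A by (simp add: poly_mat_def)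

lemma structure_lemma:
  fixes T :: "real mat" and q :: "real poly"
  assumes n: "n > 0" and T: "T \<in> SO_mats n" and irr: "irreducible q" and deg: "degree q = 2"
    and mp: "is_min_poly n T (q ^ k)"
  shows "\<exists>c. c^2 < 1 \<and> (\<forall>i<n. \<forall>j<n. (T * T) $$ (i,j) = 2 * c * T $$ (i,j) - (if i = j then 1 else 0)
     \<and> T $$ (j,i) = 2 * c * (if i = j then 1 else 0) - T $$ (i,j))"
proof -
  let ?Tt = "transpose_mat T"
  have Tc: "T \<in> carrier_mat n n" using T by (simp add: SO_mats_def)
  have Ttc: "?Tt \<in> carrier_mat n n" using Tc by simp
  have TTt: "T * ?Tt = 1\<^sub>m n" using T by (simp add: SO_mats_def)
  have TtT: "?Tt * T = 1\<^sub>m n" using SO_transpose(2)[OF T] .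
  have pm0: "poly_mat n (q ^ k) T = 0\<^sub>m n n" using mp by (simp add: is_min_poly_def)
  have k: "k \<noteq> 0"
  proof
    assume "k = 0"
    then have "(1\<^sub>m n :: real mat) = 0\<^sub>m n n" using pm0 poly_mat_one[OF Tc] by simp
    then have "(1\<^sub>m n :: real mat) $$ (0,0) = 0\<^sub>m n n $$ (0,0)" by simp
    then show False using n by simp
  qed
  let ?N = "poly_mat n q T"
  have Nc: "?N \<in> carrier_mat n n" using Tc by simp
  have Nk: "?N ^\<^sub>m k = 0\<^sub>m n n" using pm0 poly_mat_pow[OF Tc] by simp
  have Nt: "transpose_mat ?N = poly_mat n q ?Tt" by (rule poly_mat_transpose[OF Tc])
  have c1: "?N * ?Tt = ?Tt * ?N" by (rule poly_mat_comm[OF Tc Ttc]) (simp add: TTt TtT)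
  have nor: "?N * transpose_mat ?N = transpose_mat ?N * ?N"
    unfolding Nt by (rule poly_mat_comm[OF Ttc Nc, symmetric]) (use c1 in simp)
  have N0: "?N = 0\<^sub>m n n" by (rule normal_nilpotent[OF Nc nor Nk])
  define q0 where "q0 = coeff q 0"
  define q1 where "q1 = coeff q 1"
  define q2 where "q2 = coeff q 2"
  have q: "q = pCons q0 (pCons q1 (pCons q2 0))"
  proof (rule poly_eqI)
    fix i
    show "coeff q i = coeff (pCons q0 (pCons q1 (pCons q2 0))) i"
    proof (cases "i \<le> 2")
      case True
      then have "i = 0 \<or> i = 1 \<or> i = 2" by auto
      then show ?thesis by (auto simp: q0_def q1_def q2_def numeral_2_eq_2)
    next
      case False
      then have "coeff q i = 0" using deg by (intro coeff_eq_0) simp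
      moreover have ie: "i = Suc (Suc (Suc (i - 3)))" using False by simp
      moreover have "coeff (pCons q0 (pCons q1 (pCons q2 0))) i = 0" by (subst ie) simp
      ultimately show ?thesis by simp
    qed
  qed
  have q2: "q2 \<noteq> 0"
  proof -
    have "q \<noteq> 0" using deg by auto
    then have "coeff q (degree q) \<noteq> 0" by simp
    then show ?thesis using deg by (simp add: q2_def)
  qed
  have polyq: "\<And>x. poly q x = q0 + q1 * x + q2 * x^2"
    by (subst q) (simp add: algebra_simps power2_eq_square)
  have noroot: "\<And>x. q0 + q1 * x + q2 * x^2 \<noteq> 0"
    using irreducible_quadratic_no_root[OF irr deg] polyq by simp
  have TT: "T * T \<in> carrier_mat n n" using Tc by simp
  have e1: "T * (q2 \<cdot>\<^sub>m 1\<^sub>m n) = q2 \<cdot>\<^sub>m T"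
    using Tc by (simp add: right_mult_zero_mat[OF Tc] mult_smult_distrib[OF Tc one_carrier_mat])
  have e2: "T * (q1 \<cdot>\<^sub>m 1\<^sub>m n + q2 \<cdot>\<^sub>m T) = q1 \<cdot>\<^sub>m T + q2 \<cdot>\<^sub>m (T * T)"
    using Tc by (simp add: mult_add_distrib_mat[OF Tc _ smult_carrier_mat[OF Tc]] mult_smult_distrib[OF Tc one_carrier_mat]
        mult_smult_distrib[OF Tc Tc])
  have X: "q0 \<cdot>\<^sub>m 1\<^sub>m n + (q1 \<cdot>\<^sub>m T + q2 \<cdot>\<^sub>m (T * T)) = 0\<^sub>m n n"
    using N0 Tc unfolding q by (simp add: poly_mat_pCons e1 e2)
  have Y: "q0 \<cdot>\<^sub>m ?Tt + (q1 \<cdot>\<^sub>m (?Tt * T) + q2 \<cdot>\<^sub>m (?Tt * (T * T))) = 0\<^sub>m n n"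
  proof -
    have "?Tt * (q0 \<cdot>\<^sub>m 1\<^sub>m n + (q1 \<cdot>\<^sub>m T + q2 \<cdot>\<^sub>m (T * T))) = 0\<^sub>m n n"
      using X right_mult_zero_mat[OF Ttc] by simp
    moreover
    have cA: "q0 \<cdot>\<^sub>m 1\<^sub>m n \<in> carrier_mat n n" by simp
    have cB: "q1 \<cdot>\<^sub>m T \<in> carrier_mat n n" using Tc by simp
    have cC: "q2 \<cdot>\<^sub>m (T * T) \<in> carrier_mat n n" using TT by simp
    have d1: "?Tt * (q0 \<cdot>\<^sub>m 1\<^sub>m n + (q1 \<cdot>\<^sub>m T + q2 \<cdot>\<^sub>m (T * T))) =
       ?Tt * (q0 \<cdot>\<^sub>m 1\<^sub>m n) + ?Tt * (q1 \<cdot>\<^sub>m T + q2 \<cdot>\<^sub>m (T * T))"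
      by (rule mult_add_distrib_mat[OF Ttc cA add_carrier_mat[OF cC]])
    have d2: "?Tt * (q1 \<cdot>\<^sub>m T + q2 \<cdot>\<^sub>m (T * T)) = ?Tt * (q1 \<cdot>\<^sub>m T) + ?Tt * (q2 \<cdot>\<^sub>m (T * T))"
      by (rule mult_add_distrib_mat[OF Ttc cB cC])
    have s1: "?Tt * (q0 \<cdot>\<^sub>m 1\<^sub>m n) = q0 \<cdot>\<^sub>m ?Tt"
      using mult_smult_distrib[OF Ttc one_carrier_mat, of q0] Ttc by simp
    have s2: "?Tt * (q1 \<cdot>\<^sub>m T) = q1 \<cdot>\<^sub>m (?Tt * T)" by (rule mult_smult_distrib[OF Ttc Tc])
    have s3: "?Tt * (q2 \<cdot>\<^sub>m (T * T)) = q2 \<cdot>\<^sub>m (?Tt * (T * T))" by (rule mult_smult_distrib[OF Ttc TT])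
    ultimately show ?thesis by (simp only: d1 d2 s1 s2 s3)
  qed
  have TtTT: "?Tt * (T * T) = T" using assoc_mult_mat[OF Ttc Tc Tc] TtT Tc by simp
  have eX: "q0 * (if i = j then 1 else 0) + q1 * T $$ (i,j) + q2 * (T * T) $$ (i,j) = 0" if "i < n" "j < n" for i j
  proof -
    have "(q0 \<cdot>\<^sub>m 1\<^sub>m n + (q1 \<cdot>\<^sub>m T + q2 \<cdot>\<^sub>m (T * T))) $$ (i,j) = 0" using X that by simp
    then show ?thesis using that Tc by simp
  qed
  have eY: "q0 * T $$ (j,i) + q1 * (if i = j then 1 else 0) + q2 * T $$ (i,j) = 0" if "i < n" "j < n" for i j
  proof -
    have "(q0 \<cdot>\<^sub>m ?Tt + (q1 \<cdot>\<^sub>m (?Tt * T) + q2 \<cdot>\<^sub>m (?Tt * (T * T)))) $$ (i,j) = 0" using Y that by simp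
    then show ?thesis using that Tc by (simp add: TtT TtTT)
  qed
  have q02: "q0 = q2"
  proof (rule ccontr)
    assume ne: "q0 \<noteq> q2"
    have sym: "T $$ (j,i) = T $$ (i,j)" if "i < n" "j < n" for i j
    proof -
      have "q0 * T $$ (j,i) + q2 * T $$ (i,j) = q0 * T $$ (i,j) + q2 * T $$ (j,i)"
        using eY[OF that] eY[OF that(2,1)] by (auto split: if_splits)
      then have "(q0 - q2) * (T $$ (j,i) - T $$ (i,j)) = 0" by (simp add: algebra_simps)
      then show ?thesis using ne by simp
    qed
    have "?Tt = T" using sym Tc by (intro eq_matI) auto
    then have "T * T = 1\<^sub>m n" using TTt by simp
    then have t2: "(T * T) $$ (0,0) = 1" using n by simp
    define t where "t = T $$ (0,0)"
    have a: "q0 + q1 * t + q2 = 0" using eX[OF n n] t2 by (simp add: t_def)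
    have b: "q0 * t + q1 + q2 * t = 0" using eY[OF n n] by (simp add: t_def)
    show False
    proof (cases "q1 = 0")
      case True
      then have "q0 + q1 * 1 + q2 * 1^2 = 0" using a by simp
      then show False using noroot by blast
    next
      case False
      have a': "q0 + q2 = - (q1 * t)" using a by linarith
      have b': "(q0 + q2) * t + q1 = 0" using b by (simp add: algebra_simps)
      have "q1 * (1 - t * t) = 0" using b' unfolding a' by (simp add: algebra_simps)
      then have "t * t = 1" using False by simp
      then have "q0 + q1 * t + q2 * t^2 = 0" using a by (simp add: power2_eq_square)
      then show False using noroot by blast
    qed
  qed
  define c where "c = - q1 / (2 * q2)"
  have q1c: "q1 = - 2 * c * q2" using q2 by (simp add: c_def)
  have c2: "c^2 < 1"
  proof (rule ccontr)
    assume "\<not> c^2 < 1"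
    then have ge: "c^2 - 1 \<ge> 0" by simp
    define x where "x = c + sqrt (c^2 - 1)"
    have "x^2 - 2 * c * x + 1 = 0" using ge by (simp add: x_def power2_eq_square algebra_simps)
    moreover have "q0 + q1 * x + q2 * x^2 = q2 * (x^2 - 2 * c * x + 1)" using q02 q1c by (simp add: algebra_simps)
    ultimately have "q0 + q1 * x + q2 * x^2 = 0" by simp
    then show False using noroot by blast
  qed
  show ?thesis
  proof (intro exI[of _ c] conjI c2 allI impI)
    fix i j assume i: "i < n" and j: "j < n"
    have "q2 * ((if i = j then 1 else 0) - 2 * c * T $$ (i,j) + (T * T) $$ (i,j)) = 0"
      using eX[OF i j] q02 q1c by (simp add: algebra_simps)
    then have "(if i = j then 1 else 0) - 2 * c * T $$ (i,j) + (T * T) $$ (i,j) = 0" using q2 by simp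
    then show "(T * T) $$ (i,j) = 2 * c * T $$ (i,j) - (if i = j then 1 else 0)" by linarith
    have "q2 * (T $$ (j,i) - 2 * c * (if i = j then 1 else 0) + T $$ (i,j)) = 0"
      using eY[OF i j] q02 q1c by (simp add: algebra_simps)
    then have "T $$ (j,i) - 2 * c * (if i = j then 1 else 0) + T $$ (i,j) = 0" using q2 by simp
    then show "T $$ (j,i) = 2 * c * (if i = j then 1 else 0) - T $$ (i,j)" by linarith
  qed
qed

lemma XY_algebra:
  fixes A J :: "real mat" assumes A: "A \<in> carrier_mat n n" and J: "J \<in> carrier_mat n n"
    and AJ: "A * J = J * A" and JJ: "J * J = - 1\<^sub>m n"
  shows "(A + 1\<^sub>m n) * (J * A + - J) = (J * A + - J) * (A + 1\<^sub>m n)"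
    "(A + 1\<^sub>m n) * (A + 1\<^sub>m n) + (J * A + - J) * (J * A + - J) = A + (A + (A + A))"
proof -
  interpret R: ring "ring_mat TYPE(real) n ()" by (rule ring_mat)
  have inv: "\<And>x. x \<in> carrier_mat n n \<Longrightarrow> \<ominus>\<^bsub>ring_mat TYPE(real) n ()\<^esub> x = - x"
    by (rule R.minus_equality) (auto simp: ring_mat_simps)
  let ?R = "ring_mat TYPE(real) n ()"
  have AJ': "A \<otimes>\<^bsub>?R\<^esub> J = J \<otimes>\<^bsub>?R\<^esub> A" using AJ by (simp add: ring_mat_simps)
  have Ac: "A \<in> carrier ?R" and Jc: "J \<in> carrier ?R" using A J by (simp_all add: ring_mat_simps)
  have AJ2: "A \<otimes>\<^bsub>?R\<^esub> (J \<otimes>\<^bsub>?R\<^esub> x) = J \<otimes>\<^bsub>?R\<^esub> (A \<otimes>\<^bsub>?R\<^esub> x)" if "x \<in> carrier ?R" for x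
    by (simp only: R.m_assoc[symmetric, OF Ac Jc that] AJ' R.m_assoc[OF Jc Ac that])
  have JJ': "J \<otimes>\<^bsub>?R\<^esub> J = \<ominus>\<^bsub>?R\<^esub> \<one>\<^bsub>?R\<^esub>" using JJ by (simp add: ring_mat_simps inv)
  have JJ2: "J \<otimes>\<^bsub>?R\<^esub> (J \<otimes>\<^bsub>?R\<^esub> x) = \<ominus>\<^bsub>?R\<^esub> x" if "x \<in> carrier ?R" for x
    by (simp only: R.m_assoc[symmetric, OF Jc Jc that] JJ' R.l_minus[OF R.one_closed that] R.l_one[OF that])
  have "(A \<oplus>\<^bsub>?R\<^esub> \<one>\<^bsub>?R\<^esub>) \<otimes>\<^bsub>?R\<^esub> (J \<otimes>\<^bsub>?R\<^esub> A \<oplus>\<^bsub>?R\<^esub> \<ominus>\<^bsub>?R\<^esub> J) =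
        (J \<otimes>\<^bsub>?R\<^esub> A \<oplus>\<^bsub>?R\<^esub> \<ominus>\<^bsub>?R\<^esub> J) \<otimes>\<^bsub>?R\<^esub> (A \<oplus>\<^bsub>?R\<^esub> \<one>\<^bsub>?R\<^esub>)"
    using Ac Jc by (simp add: R.ring_simprules AJ' AJ2 JJ' JJ2)
  then show "(A + 1\<^sub>m n) * (J * A + - J) = (J * A + - J) * (A + 1\<^sub>m n)"
    using A J by (simp add: inv ring_mat_simps)
  have "(A \<oplus>\<^bsub>?R\<^esub> \<one>\<^bsub>?R\<^esub>) \<otimes>\<^bsub>?R\<^esub> (A \<oplus>\<^bsub>?R\<^esub> \<one>\<^bsub>?R\<^esub>) \<oplus>\<^bsub>?R\<^esub> (J \<otimes>\<^bsub>?R\<^esub> A \<oplus>\<^bsub>?R\<^esub> \<ominus>\<^bsub>?R\<^esub> J) \<otimes>\<^bsub>?R\<^esub> (J \<otimes>\<^bsub>?R\<^esub> A \<oplus>\<^bsub>?R\<^esub> \<ominus>\<^bsub>?R\<^esub> J) =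
        A \<oplus>\<^bsub>?R\<^esub> (A \<oplus>\<^bsub>?R\<^esub> (A \<oplus>\<^bsub>?R\<^esub> A))"
    using Ac Jc by (simp add: R.ring_simprules AJ' AJ2 JJ' JJ2)
  then show "(A + 1\<^sub>m n) * (A + 1\<^sub>m n) + (J * A + - J) * (J * A + - J) = A + (A + (A + A))"
    using A J by (simp add: inv ring_mat_simps)
qed

lemma cnj_hom: "comm_ring_hom cnj"
  by unfold_locales auto

lemma det_sum_squares_nonneg:
  fixes X Y :: "real mat" assumes X: "X \<in> carrier_mat n n" and Y: "Y \<in> carrier_mat n n"
    and XY: "X * Y = Y * X"
  shows "det (X * X + Y * Y) \<ge> 0"
proof -
  define W :: "complex mat" where
    "W = mat n n (\<lambda>(a,b). complex_of_real (X $$ (a,b)) + \<i> * complex_of_real (Y $$ (a,b)))"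
  define W' where "W' = map_mat cnj W"
  have Wc: "W \<in> carrier_mat n n" by (simp add: W_def)
  have W'c: "W' \<in> carrier_mat n n" by (simp add: W'_def W_def)
  have prod: "W * W' = map_mat complex_of_real (X * X + Y * Y)"
  proof (rule eq_matI)
    fix a b assume a: "a < dim_row (map_mat complex_of_real (X * X + Y * Y))"
      and b: "b < dim_col (map_mat complex_of_real (X * X + Y * Y))"
    then have a: "a < n" and b: "b < n" using X Y by auto
    have xy: "(\<Sum>l = 0..<n. X $$ (a,l) * Y $$ (l,b)) = (\<Sum>l = 0..<n. Y $$ (a,l) * X $$ (l,b))"
    proof -
      have "(X * Y) $$ (a,b) = (Y * X) $$ (a,b)" using XY by simp
      then show ?thesis using X Y a b by (simp add: scalar_prod_def)
    qed
    have "(W * W') $$ (a,b) = (\<Sum>l = 0..<n. (complex_of_real (X $$ (a,l)) + \<i> * complex_of_real (Y $$ (a,l)))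
        * (complex_of_real (X $$ (l,b)) - \<i> * complex_of_real (Y $$ (l,b))))"
      using a b by (simp add: W_def W'_def scalar_prod_def)
    also have "\<dots> = (\<Sum>l = 0..<n. complex_of_real (X $$ (a,l) * X $$ (l,b) + Y $$ (a,l) * Y $$ (l,b))
        + \<i> * (complex_of_real (Y $$ (a,l) * X $$ (l,b)) - complex_of_real (X $$ (a,l) * Y $$ (l,b))))"
      by (intro sum.cong refl) (simp add: algebra_simps)
    also have "\<dots> = complex_of_real (\<Sum>l = 0..<n. X $$ (a,l) * X $$ (l,b) + Y $$ (a,l) * Y $$ (l,b))
        + \<i> * (complex_of_real (\<Sum>l = 0..<n. Y $$ (a,l) * X $$ (l,b)) - complex_of_real (\<Sum>l = 0..<n. X $$ (a,l) * Y $$ (l,b)))"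
      by (simp add: sum.distrib sum_subtractf flip: sum_distrib_left)
    also have "\<dots> = complex_of_real (\<Sum>l = 0..<n. X $$ (a,l) * X $$ (l,b) + Y $$ (a,l) * Y $$ (l,b))"
      using xy by simp
    also have "\<dots> = map_mat complex_of_real (X * X + Y * Y) $$ (a,b)"
      using X Y a b by (simp add: scalar_prod_def sum.distrib)
    finally show "(W * W') $$ (a,b) = map_mat complex_of_real (X * X + Y * Y) $$ (a,b)" .
  qed (use X Y in \<open>auto simp: W_def W'_def\<close>)
  have "complex_of_real (det (X * X + Y * Y)) = det (map_mat complex_of_real (X * X + Y * Y))"
    by (simp add: of_real_hom.hom_det)
  also have "\<dots> = det W * det W'" by (simp add: prod[symmetric] det_mult[OF Wc W'c])
  also have "det W' = cnj (det W)" unfolding W'_def by (rule comm_ring_hom.hom_det[OF cnj_hom])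
  also have "det W * cnj (det W) = complex_of_real ((Re (det W))^2 + (Im (det W))^2)"
    by (rule complex_mult_cnj)
  finally have "det (X * X + Y * Y) = (Re (det W))^2 + (Im (det W))^2"
    using of_real_eq_iff by blast
  then show ?thesis by simp
qed

lemma det_commuting_nonneg:
  fixes A J :: "real mat" assumes A: "A \<in> carrier_mat n n" and J: "J \<in> carrier_mat n n"
    and AJ: "A * J = J * A" and JJ: "J * J = - 1\<^sub>m n"
  shows "det A \<ge> 0"
proof -
  have Xc: "A + 1\<^sub>m n \<in> carrier_mat n n" using A by simp
  have Yc: "J * A + - J \<in> carrier_mat n n" using A J by (simp add: uminus_carrier_mat)
  have "det ((A + 1\<^sub>m n) * (A + 1\<^sub>m n) + (J * A + - J) * (J * A + - J)) \<ge> 0"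
    by (rule det_sum_squares_nonneg[OF Xc Yc XY_algebra(1)[OF A J AJ JJ]])
  also have "(A + 1\<^sub>m n) * (A + 1\<^sub>m n) + (J * A + - J) * (J * A + - J) = 4 \<cdot>\<^sub>m A"
    unfolding XY_algebra(2)[OF A J AJ JJ] using A by (intro eq_matI) auto
  finally have "0 \<le> 4 ^ n * det A" using A by simp
  moreover have "(0::real) < 4 ^ n" by simp
  ultimately show ?thesis by (simp add: zero_le_mult_iff)
qed

lemma self_scalar_pos:
  fixes w :: "real vec" assumes w: "w \<in> carrier_vec n" and nz: "w \<noteq> 0\<^sub>v n"
  shows "w \<bullet> w > 0"
proof -
  have ge: "w \<bullet> w = (\<Sum>i = 0..<n. w $ i * w $ i)" using w by (simp add: scalar_prod_def)
  have "w \<bullet> w \<noteq> 0"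
  proof
    assume "w \<bullet> w = 0"
    then have "\<forall>i\<in>{0..<n}. w $ i * w $ i = 0" unfolding ge
      by (subst sum_nonneg_eq_0_iff[symmetric]) auto
    then have "w = 0\<^sub>v n" using w by (intro eq_vecI) auto
    then show False using nz by simp
  qed
  moreover have "w \<bullet> w \<ge> 0" unfolding ge by (intro sum_nonneg) auto
  ultimately show ?thesis by simp
qed

lemma exists_orth_vec:
  fixes u :: "nat \<Rightarrow> real vec" assumes p: "p < n" and u: "\<And>r. r < p \<Longrightarrow> u r \<in> carrier_vec n"
  shows "\<exists>v \<in> carrier_vec n. v \<bullet> v = 1 \<and> (\<forall>r<p. u r \<bullet> v = 0)"
proof -
  define c where "c i = (if i < p then u i else 0\<^sub>v n)" for i
  define B where "B = mat\<^sub>r n n (\<lambda>i. if i = n - 1 then 0\<^sub>v n else c i)"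
  have cc: "c \<in> {0..<n} \<rightarrow> carrier_vec n" using u by (auto simp: c_def)
  have Bc: "B \<in> carrier_mat n n" by (simp add: B_def)
  have "det B = 0" unfolding B_def by (rule det_row_0[OF _ cc]) (use p in simp)
  then obtain w where w: "w \<in> carrier_vec n" "w \<noteq> 0\<^sub>v n" "B *\<^sub>v w = 0\<^sub>v n"
    using det_0_iff_vec_prod_zero[OF Bc] by auto
  have orth: "u r \<bullet> w = 0" if r: "r < p" for r
  proof -
    have rn: "r < n" "r \<noteq> n - 1" using r p by auto
    have "(B *\<^sub>v w) $ r = 0" using w(3) rn by simp
    moreover have "row B r = u r" using rn r u[OF r] by (simp add: B_def c_def)
    ultimately show ?thesis using rn Bc by simp
  qed
  have pos: "w \<bullet> w > 0" by (rule self_scalar_pos[OF w(1,2)])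
  define v where "v = (1 / sqrt (w \<bullet> w)) \<cdot>\<^sub>v w"
  have vc: "v \<in> carrier_vec n" using w by (simp add: v_def)
  have "v \<bullet> v = (1 / sqrt (w \<bullet> w)) * ((1 / sqrt (w \<bullet> w)) * (w \<bullet> w))"
    using w by (simp add: v_def)
  also have "\<dots> = 1" using pos by (simp add: field_simps)
  finally have vv: "v \<bullet> v = 1" .
  have "u r \<bullet> v = 0" if "r < p" for r
    using orth[OF that] u[OF that] w by (simp add: v_def)
  then show ?thesis using vc vv by blast
qed

lemma J_skew_vec:
  fixes J :: "real mat" assumes J: "J \<in> carrier_mat n n" and Jt: "transpose_mat J = - J"
    and x: "x \<in> carrier_vec n" and y: "y \<in> carrier_vec n"
  shows "x \<bullet> (J *\<^sub>v y) = - ((J *\<^sub>v x) \<bullet> y)"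
proof -
  have "(transpose_mat J *\<^sub>v x) \<bullet> y = x \<bullet> (J *\<^sub>v y)" by (rule transpose_vec_mult_scalar[OF J y x])
  then show ?thesis using Jt J x y by simp
qed

lemma J_JJ_vec:
  fixes J :: "real mat" assumes J: "J \<in> carrier_mat n n" and JJ: "J * J = - 1\<^sub>m n"
    and x: "x \<in> carrier_vec n"
  shows "J *\<^sub>v (J *\<^sub>v x) = - x"
proof -
  have "J *\<^sub>v (J *\<^sub>v x) = (J * J) *\<^sub>v x" using J x by simp
  also have "\<dots> = - x" using JJ x by simp
  finally show ?thesis .
qed

definition Jbasis :: "real mat \<Rightarrow> nat \<Rightarrow> nat \<Rightarrow> (nat \<Rightarrow> real vec) \<Rightarrow> bool" where
  "Jbasis J n p u \<longleftrightarrow> (\<forall>r<p. u r \<in> carrier_vec n) \<and>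
     (\<forall>i<p. \<forall>j<p. u i \<bullet> u j = (if i = j then 1 else 0)) \<and>
     (\<forall>r<p. J *\<^sub>v u r = (if even r then u (Suc r) else - u (r - 1)))"

lemma Jbasis_exists:
  fixes J :: "real mat" assumes J: "J \<in> carrier_mat n n" and Jt: "transpose_mat J = - J"
    and JJ: "J * J = - 1\<^sub>m n"
  shows "2 * k \<le> n \<Longrightarrow> \<exists>u. Jbasis J n (2 * k) u"
proof (induct k)
  case 0
  then show ?case by (simp add: Jbasis_def)
next
  case (Suc k)
  then obtain u where u: "Jbasis J n (2 * k) u" by auto
  have uc: "\<And>r. r < 2 * k \<Longrightarrow> u r \<in> carrier_vec n" using u by (simp add: Jbasis_def)
  have uo: "\<And>i j. i < 2 * k \<Longrightarrow> j < 2 * k \<Longrightarrow> u i \<bullet> u j = (if i = j then 1 else 0)"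
    using u by (simp add: Jbasis_def)
  have uJ: "\<And>r. r < 2 * k \<Longrightarrow> J *\<^sub>v u r = (if even r then u (Suc r) else - u (r - 1))"
    using u by (simp add: Jbasis_def)
  have p: "2 * k < n" using Suc.prems by simp
  obtain e where ec: "e \<in> carrier_vec n" and ee: "e \<bullet> e = 1" and ue: "\<And>r. r < 2 * k \<Longrightarrow> u r \<bullet> e = 0"
  proof -
    have "\<exists>v\<in>carrier_vec n. v \<bullet> v = 1 \<and> (\<forall>r<2 * k. u r \<bullet> v = 0)"
      by (rule exists_orth_vec[OF p]) (rule uc)
    then show ?thesis using that by blast
  qed
  define f where "f = J *\<^sub>v e"
  have fc: "f \<in> carrier_vec n" using J ec by (simp add: f_def)
  have Juc: "\<And>r. r < 2 * k \<Longrightarrow> J *\<^sub>v u r \<in> carrier_vec n" using J uc by simp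
  have Ju_in: "\<And>r. r < 2 * k \<Longrightarrow> (J *\<^sub>v u r) \<bullet> e = 0"
  proof -
    fix r assume r: "r < 2 * k"
    show "(J *\<^sub>v u r) \<bullet> e = 0"
    proof (cases "even r")
      case True
      then have "Suc r < 2 * k" using r by presburger
      then show ?thesis using uJ[OF r] True ue by simp
    next
      case False
      then have r1: "r - 1 < 2 * k" using r by simp
      then show ?thesis using uJ[OF r] False ue[OF r1] uc[OF r1] ec by simp
    qed
  qed
  have uf: "\<And>r. r < 2 * k \<Longrightarrow> u r \<bullet> f = 0"
    unfolding f_def using J_skew_vec[OF J Jt uc ec] Ju_in by simp
  have ef: "e \<bullet> f = 0"
  proof -
    have "e \<bullet> f = - (f \<bullet> e)" unfolding f_def by (rule J_skew_vec[OF J Jt ec ec])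
    moreover have "f \<bullet> e = e \<bullet> f" by (rule comm_scalar_prod[OF fc ec])
    ultimately show ?thesis by simp
  qed
  have ff: "f \<bullet> f = 1"
  proof -
    have "f \<bullet> f = e \<bullet> (J *\<^sub>v f) * (-1)" using J_skew_vec[OF J Jt ec fc] by (simp add: f_def)
    also have "J *\<^sub>v f = - e" unfolding f_def by (rule J_JJ_vec[OF J JJ ec])
    finally show ?thesis using ec ee by simp
  qed
  define u' where "u' = u(2 * k := e, Suc (2 * k) := f)"
  have u'c: "\<forall>r<2 * Suc k. u' r \<in> carrier_vec n" using uc ec fc by (auto simp: u'_def)
  have sym: "\<And>i j. i < 2 * Suc k \<Longrightarrow> j < 2 * Suc k \<Longrightarrow> u' i \<bullet> u' j = u' j \<bullet> u' i"
    using u'c by (metis comm_scalar_prod)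
  have o1: "u' i \<bullet> u' j = (if i = j then 1 else 0)" if i: "i < 2 * Suc k" and j: "j < 2 * Suc k" and ij: "i \<le> j" for i j
  proof -
    have "j < 2 * k \<or> j = 2 * k \<or> j = Suc (2 * k)" using j by auto
    then consider "j < 2 * k" | "j = 2 * k" | "j = Suc (2 * k)" by blast
    then show ?thesis
    proof cases
      case 1
      then show ?thesis using ij uo[of i j] by (simp add: u'_def)
    next
      case 2
      then show ?thesis using ij ue[of i] ee by (cases "i = 2 * k") (auto simp: u'_def)
    next
      case 3
      then show ?thesis using ij uf[of i] ff ef by (cases "i = Suc (2 * k)"; cases "i = 2 * k") (auto simp: u'_def)
    qed
  qed
  have o2: "\<forall>i<2 * Suc k. \<forall>j<2 * Suc k. u' i \<bullet> u' j = (if i = j then 1 else 0)"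
  proof (intro allI impI)
    fix i j assume i: "i < 2 * Suc k" and j: "j < 2 * Suc k"
    show "u' i \<bullet> u' j = (if i = j then 1 else 0)"
    proof (cases "i \<le> j")
      case True then show ?thesis using o1 i j by blast
    next
      case False then show ?thesis using o1[OF j i] sym[OF i j] by auto
    qed
  qed
  have o3: "\<forall>r<2 * Suc k. J *\<^sub>v u' r = (if even r then u' (Suc r) else - u' (r - 1))"
  proof (intro allI impI)
    fix r assume r: "r < 2 * Suc k"
    have "r < 2 * k \<or> r = 2 * k \<or> r = Suc (2 * k)" using r by auto
    then consider "r < 2 * k" | "r = 2 * k" | "r = Suc (2 * k)" by blast
    then show "J *\<^sub>v u' r = (if even r then u' (Suc r) else - u' (r - 1))"
    proof cases
      case 1
      then have "even r \<Longrightarrow> Suc r < 2 * k" by presburger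
      then show ?thesis using 1 uJ[OF 1] by (auto simp: u'_def)
    next
      case 2
      then show ?thesis by (simp add: u'_def f_def)
    next
      case 3
      then show ?thesis using J_JJ_vec[OF J JJ ec] by (simp add: u'_def f_def)
    qed
  qed
  show ?case using u'c o2 o3 by (auto simp: Jbasis_def)
qed

lemma prod_signs: "(\<Prod>i = 0..<2 * m. (-1::real) ^ i) = (-1) ^ m"
proof (induct m)
  case 0 then show ?case by simp
next
  case (Suc m)
  have "(\<Prod>i = 0..<2 * Suc m. (-1::real) ^ i) = (\<Prod>i = 0..<2 * m. (-1::real) ^ i) * ((-1) ^ (2 * m) * (-1) ^ Suc (2 * m))"
    by (simp add: prod.atLeast0_lessThan_Suc)
  also have "\<dots> = (-1) ^ Suc m" using Suc by simp
  finally show ?case .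
qed

lemma det_D:
  assumes "even n"
  shows "det (mat n n (\<lambda>(a,b). if a = b then (-1::real) ^ a else 0)) = (-1) ^ (n div 2)"
proof -
  let ?D = "mat n n (\<lambda>(a,b). if a = b then (-1::real) ^ a else 0)"
  have "upper_triangular ?D" by (auto simp: upper_triangular_def)
  moreover have "?D \<in> carrier_mat n n" by simp
  ultimately have "det ?D = prod_list (diag_mat ?D)" by (rule det_upper_triangular)
  also have "\<dots> = (\<Prod>i = 0..<n. (-1::real) ^ i)" by (simp add: prod_list_diag_prod)
  also have "\<dots> = (-1) ^ (n div 2)" using assms prod_signs[of "n div 2"] by simp
  finally show ?thesis .
qed

lemma sum_delta_left: fixes a n :: nat shows "a < n \<Longrightarrow> (\<Sum>l = 0..<n. (if a = l then x else (0::real)) * y l) = x * y a"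
proof -
  assume a: "a < n"
  have "(\<Sum>l = 0..<n. (if a = l then x else (0::real)) * y l) = (\<Sum>l = 0..<n. if a = l then x * y l else 0)"
    by (intro sum.cong) auto
  also have "\<dots> = x * y a" using a sum.delta'[of "{0..<n}" a "\<lambda>l. x * y l"] by simp
  finally show ?thesis .
qed

lemma sum_delta_right: fixes b n :: nat shows "b < n \<Longrightarrow> (\<Sum>l = 0..<n. y l * (if l = b then x l else (0::real))) = y b * x b"
proof -
  assume b: "b < n"
  have "(\<Sum>l = 0..<n. y l * (if l = b then x l else (0::real))) = (\<Sum>l = 0..<n. if l = b then y l * x l else 0)"
    by (intro sum.cong) auto
  also have "\<dots> = y b * x b" using b sum.delta[of "{0..<n}" b "\<lambda>l. y l * x l"] by simp
  finally show ?thesis .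
qed

lemma exists_g:
  fixes J :: "real mat" assumes J: "J \<in> carrier_mat n n" and Jt: "transpose_mat J = - J"
    and JJ: "J * J = - 1\<^sub>m n" and en: "even n"
  shows "\<exists>g \<in> carrier_mat n n. g * transpose_mat g = 1\<^sub>m n \<and> g * J = - (J * g) \<and> det g = (-1) ^ (n div 2)"
proof -
  obtain u where u: "Jbasis J n n u" using Jbasis_exists[OF J Jt JJ, of "n div 2"] en by auto
  have uc: "\<And>r. r < n \<Longrightarrow> u r \<in> carrier_vec n" using u by (simp add: Jbasis_def)
  have uo: "\<And>i j. i < n \<Longrightarrow> j < n \<Longrightarrow> u i \<bullet> u j = (if i = j then 1 else 0)"
    using u by (simp add: Jbasis_def)
  have uJ: "\<And>r. r < n \<Longrightarrow> J *\<^sub>v u r = (if even r then u (Suc r) else - u (r - 1))"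
    using u by (simp add: Jbasis_def)
  define U where "U = mat n n (\<lambda>(r,c). u c $ r)"
  let ?Ut = "transpose_mat U"
  have Uc: "U \<in> carrier_mat n n" by (simp add: U_def)
  have Utc: "?Ut \<in> carrier_mat n n" by (simp add: U_def)
  have colU: "col U c = u c" if c: "c < n" for c
  proof -
    have d: "dim_vec (u c) = n" using uc[OF c] by auto
    show ?thesis by (rule eq_vecI) (use c d in \<open>auto simp: U_def\<close>)
  qed
  have UtU: "?Ut * U = 1\<^sub>m n"
  proof (rule eq_matI)
    fix a b assume a: "a < dim_row (1\<^sub>m n :: real mat)" and b: "b < dim_col (1\<^sub>m n :: real mat)"
    then show "(?Ut * U) $$ (a,b) = 1\<^sub>m n $$ (a,b)" using Uc colU uo by simp
  qed (use Uc in auto)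
  have UUt: "U * ?Ut = 1\<^sub>m n" by (rule mat_mult_left_right_inverse[OF Utc Uc UtU])
  define K where "K = mat n n (\<lambda>(a,b). if even b then (if a = Suc b then 1 else 0) else (if a = b - 1 then -1 else (0::real)))"
  have Kc: "K \<in> carrier_mat n n" by (simp add: K_def)
  have KJ: "?Ut * (J * U) = K"
  proof (rule eq_matI)
    fix a b assume a: "a < dim_row K" and b: "b < dim_col K"
    then have a: "a < n" and b: "b < n" by (auto simp: K_def)
    have "(?Ut * (J * U)) $$ (a,b) = u a \<bullet> (J *\<^sub>v u b)" using a b Uc J colU by (simp add: mult_mat_vec_def)
    also have "\<dots> = K $$ (a,b)"
    proof (cases "even b")
      case True
      then have "Suc b < n" using b en by presburger
      then show ?thesis using True uJ[OF b] uo[OF a] a b by (simp add: K_def)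
    next
      case False
      then have b1: "b - 1 < n" using b by simp
      have e: "u a \<bullet> u (b - 1) = (if a = b - 1 then 1 else 0)" by (rule uo[OF a b1])
      have "u a \<bullet> (J *\<^sub>v u b) = - (u a \<bullet> u (b - 1))"
        using False uJ[OF b] uc[OF a] uc[OF b1] by simp
      then show ?thesis using e False a b by (simp add: K_def)
    qed
    finally show "(?Ut * (J * U)) $$ (a,b) = K $$ (a,b)" .
  qed (use Uc J in \<open>auto simp: K_def\<close>)
  define D where "D = mat n n (\<lambda>(a,b). if a = b then (-1::real) ^ a else 0)"
  have Dc: "D \<in> carrier_mat n n" by (simp add: D_def)
  have DK: "D * K = - (K * D)"
  proof (rule eq_matI)
    fix a b assume a: "a < dim_row (- (K * D))" and b: "b < dim_col (- (K * D))"
    then have a: "a < n" and b: "b < n" by (auto simp: K_def D_def)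
    have l: "(D * K) $$ (a,b) = (-1) ^ a * K $$ (a,b)"
      using a b Kc by (simp add: D_def scalar_prod_def sum_delta_left)
    have r: "(K * D) $$ (a,b) = K $$ (a,b) * (-1) ^ b"
      using a b Kc by (simp add: D_def scalar_prod_def sum_delta_right)
    have "(-1::real) ^ a * K $$ (a,b) = - (K $$ (a,b) * (-1) ^ b)"
    proof (cases "even b")
      case True
      then show ?thesis using a b by (auto simp: K_def)
    next
      case False
      then have bs: "b = Suc (b - 1)" by presburger
      have "(-1::real) ^ b = - ((-1) ^ (b - 1))" by (subst bs) simp
      then show ?thesis using False a b by (auto simp: K_def)
    qed
    then show "(D * K) $$ (a,b) = (- (K * D)) $$ (a,b)" using l r a b Kc Dc by simp
  qed (use Dc Kc in auto)
  have DD: "D * D = 1\<^sub>m n"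
  proof (rule eq_matI)
    fix a b assume a: "a < dim_row (1\<^sub>m n :: real mat)" and b: "b < dim_col (1\<^sub>m n :: real mat)"
    then have a: "a < n" and b: "b < n" by auto
    have "(D * D) $$ (a,b) = (if a = b then (-1) ^ a else 0) * (-1) ^ b"
      using a b by (simp add: D_def scalar_prod_def sum_delta_left)
    then show "(D * D) $$ (a,b) = 1\<^sub>m n $$ (a,b)" using a b by (simp flip: power_add)
  qed (use Dc in auto)
  have Dt: "transpose_mat D = D" by (rule eq_matI) (auto simp: D_def)
  define g where "g = U * D * ?Ut"
  have gc: "g \<in> carrier_mat n n" using Uc Dc Utc by (simp add: g_def)
  have gt: "transpose_mat g = U * (D * ?Ut)"
    unfolding g_def using Uc Dc by (simp add: transpose_mult[of _ n n _ n] Dt)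
  interpret R: ring "ring_mat TYPE(real) n ()" by (rule ring_mat)
  let ?R = "ring_mat TYPE(real) n ()"
  have inv: "\<And>x. x \<in> carrier_mat n n \<Longrightarrow> \<ominus>\<^bsub>?R\<^esub> x = - x"
    by (rule R.minus_equality) (auto simp: ring_mat_simps)
  have C: "U \<in> carrier ?R" "?Ut \<in> carrier ?R" "D \<in> carrier ?R" "K \<in> carrier ?R" "J \<in> carrier ?R"
    using Uc Utc Dc Kc J by (simp_all add: ring_mat_simps)
  have UtU': "?Ut \<otimes>\<^bsub>?R\<^esub> U = \<one>\<^bsub>?R\<^esub>" using UtU by (simp add: ring_mat_simps)
  have UUt': "U \<otimes>\<^bsub>?R\<^esub> ?Ut = \<one>\<^bsub>?R\<^esub>" using UUt by (simp add: ring_mat_simps)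
  have DD': "D \<otimes>\<^bsub>?R\<^esub> D = \<one>\<^bsub>?R\<^esub>" using DD by (simp add: ring_mat_simps)
  have DK': "D \<otimes>\<^bsub>?R\<^esub> K = \<ominus>\<^bsub>?R\<^esub> (K \<otimes>\<^bsub>?R\<^esub> D)" using DK Kc Dc by (simp add: ring_mat_simps inv)
  have KJ': "?Ut \<otimes>\<^bsub>?R\<^esub> (J \<otimes>\<^bsub>?R\<^esub> U) = K" using KJ by (simp add: ring_mat_simps)
  have c1: "?Ut \<otimes>\<^bsub>?R\<^esub> (U \<otimes>\<^bsub>?R\<^esub> x) = x" if "x \<in> carrier ?R" for x
    by (simp only: R.m_assoc[symmetric, OF C(2) C(1) that] UtU' R.l_one[OF that])
  have c2: "U \<otimes>\<^bsub>?R\<^esub> (?Ut \<otimes>\<^bsub>?R\<^esub> x) = x" if "x \<in> carrier ?R" for x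
    by (simp only: R.m_assoc[symmetric, OF C(1) C(2) that] UUt' R.l_one[OF that])
  have c3: "D \<otimes>\<^bsub>?R\<^esub> (D \<otimes>\<^bsub>?R\<^esub> x) = x" if "x \<in> carrier ?R" for x
    by (simp only: R.m_assoc[symmetric, OF C(3) C(3) that] DD' R.l_one[OF that])
  have c4: "D \<otimes>\<^bsub>?R\<^esub> (K \<otimes>\<^bsub>?R\<^esub> x) = \<ominus>\<^bsub>?R\<^esub> (K \<otimes>\<^bsub>?R\<^esub> (D \<otimes>\<^bsub>?R\<^esub> x))" if "x \<in> carrier ?R" for x
    by (simp only: R.m_assoc[symmetric, OF C(3) C(4) that] DK' R.l_minus[OF R.m_closed[OF C(4) C(3)] that]
        R.m_assoc[OF C(4) C(3) that])
  have Jeq: "J = U \<otimes>\<^bsub>?R\<^esub> (K \<otimes>\<^bsub>?R\<^esub> ?Ut)"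
    unfolding KJ'[symmetric] using C by (simp add: R.m_assoc c2 UUt')
  have "U \<otimes>\<^bsub>?R\<^esub> D \<otimes>\<^bsub>?R\<^esub> ?Ut \<otimes>\<^bsub>?R\<^esub> (U \<otimes>\<^bsub>?R\<^esub> (K \<otimes>\<^bsub>?R\<^esub> ?Ut)) =
      \<ominus>\<^bsub>?R\<^esub> (U \<otimes>\<^bsub>?R\<^esub> (K \<otimes>\<^bsub>?R\<^esub> ?Ut) \<otimes>\<^bsub>?R\<^esub> (U \<otimes>\<^bsub>?R\<^esub> D \<otimes>\<^bsub>?R\<^esub> ?Ut))"
    using C by (simp add: R.m_assoc c1 c4 R.r_minus)
  then have gJ: "g * J = - (J * g)"
    unfolding Jeq[symmetric] using J gc by (simp add: g_def ring_mat_simps inv)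
  have "U \<otimes>\<^bsub>?R\<^esub> D \<otimes>\<^bsub>?R\<^esub> ?Ut \<otimes>\<^bsub>?R\<^esub> (U \<otimes>\<^bsub>?R\<^esub> (D \<otimes>\<^bsub>?R\<^esub> ?Ut)) = \<one>\<^bsub>?R\<^esub>"
    using C by (simp add: R.m_assoc c1 c3 UUt')
  then have ggt: "g * transpose_mat g = 1\<^sub>m n"
    unfolding gt by (simp add: g_def ring_mat_simps)
  have "det g = det U * det D * det ?Ut"
    unfolding g_def using Uc Dc Utc by (simp add: det_mult[of _ n])
  also have "\<dots> = det D * det (U * ?Ut)" using Uc Utc by (simp add: det_mult[OF Uc Utc])
  also have "\<dots> = (-1) ^ (n div 2)" using UUt det_D[OF en] by (simp add: D_def)
  finally show ?thesis using gc gJ ggt by blast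
qed

lemma add_cancel_mat:
  fixes C X Y :: "real mat" assumes "C \<in> carrier_mat n n" "X \<in> carrier_mat n n" "Y \<in> carrier_mat n n"
  shows "C + X = C + Y \<longleftrightarrow> X = Y"
proof
  assume e: "C + X = C + Y"
  show "X = Y"
  proof (rule eq_matI)
    fix i j assume "i < dim_row Y" "j < dim_col Y"
    then have "(C + X) $$ (i,j) = (C + Y) $$ (i,j)" using e by simp
    then show "X $$ (i,j) = Y $$ (i,j)" using assms \<open>i < dim_row Y\<close> \<open>j < dim_col Y\<close> by simp
  qed (use assms in auto)
qed simp

lemma smult_cancel_mat:
  fixes X Y :: "real mat" assumes "X \<in> carrier_mat n n" "Y \<in> carrier_mat n n" and s: "s \<noteq> 0"
  shows "s \<cdot>\<^sub>m X = s \<cdot>\<^sub>m Y \<longleftrightarrow> X = Y"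
proof
  assume e: "s \<cdot>\<^sub>m X = s \<cdot>\<^sub>m Y"
  show "X = Y"
  proof (rule eq_matI)
    fix i j assume "i < dim_row Y" "j < dim_col Y"
    then have "(s \<cdot>\<^sub>m X) $$ (i,j) = (s \<cdot>\<^sub>m Y) $$ (i,j)" using e by simp
    then show "X $$ (i,j) = Y $$ (i,j)" using assms \<open>i < dim_row Y\<close> \<open>j < dim_col Y\<close> by simp
  qed (use assms in auto)
qed simp

lemma criterion:
  fixes T J h :: "real mat"
  assumes T: "T \<in> carrier_mat n n" and J: "J \<in> carrier_mat n n" and h: "h \<in> carrier_mat n n"
    and s: "s \<noteq> 0" and hht: "h * transpose_mat h = 1\<^sub>m n" and hth: "transpose_mat h * h = 1\<^sub>m n"
    and TJ: "T = c \<cdot>\<^sub>m 1\<^sub>m n + s \<cdot>\<^sub>m J" and Tt: "transpose_mat T = c \<cdot>\<^sub>m 1\<^sub>m n + s \<cdot>\<^sub>m (- J)"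
  shows "h * T * transpose_mat h = transpose_mat T \<longleftrightarrow> h * J = - (J * h)"
proof -
  let ?ht = "transpose_mat h"
  have htc: "?ht \<in> carrier_mat n n" using h by simp
  have hJ: "h * J \<in> carrier_mat n n" using h J by simp
  have s1: "h * T = c \<cdot>\<^sub>m h + s \<cdot>\<^sub>m (h * J)"
  proof -
    have "h * T = h * (c \<cdot>\<^sub>m 1\<^sub>m n) + h * (s \<cdot>\<^sub>m J)"
      unfolding TJ by (rule mult_add_distrib_mat[OF h smult_carrier_mat[OF one_carrier_mat] smult_carrier_mat[OF J]])
    also have "h * (c \<cdot>\<^sub>m 1\<^sub>m n) = c \<cdot>\<^sub>m h" using mult_smult_distrib[OF h one_carrier_mat, of c] h by simp
    also have "h * (s \<cdot>\<^sub>m J) = s \<cdot>\<^sub>m (h * J)" by (rule mult_smult_distrib[OF h J])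
    finally show ?thesis .
  qed
  have s2: "h * T * ?ht = c \<cdot>\<^sub>m 1\<^sub>m n + s \<cdot>\<^sub>m (h * J * ?ht)"
  proof -
    have "h * T * ?ht = (c \<cdot>\<^sub>m h) * ?ht + (s \<cdot>\<^sub>m (h * J)) * ?ht"
      unfolding s1 by (rule add_mult_distrib_mat[OF smult_carrier_mat[OF h] smult_carrier_mat[OF hJ] htc])
    also have "(c \<cdot>\<^sub>m h) * ?ht = c \<cdot>\<^sub>m 1\<^sub>m n" using mult_smult_assoc_mat[OF h htc, of c] hht by simp
    also have "(s \<cdot>\<^sub>m (h * J)) * ?ht = s \<cdot>\<^sub>m (h * J * ?ht)" by (rule mult_smult_assoc_mat[OF hJ htc])
    finally show ?thesis .
  qed
  have "h * T * ?ht = transpose_mat T \<longleftrightarrow> s \<cdot>\<^sub>m (h * J * ?ht) = s \<cdot>\<^sub>m (- J)"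
    unfolding s2 Tt by (rule add_cancel_mat[of _ n]) (use h J in \<open>simp_all add: uminus_carrier_mat\<close>)
  also have "\<dots> \<longleftrightarrow> h * J * ?ht = - J" by (rule smult_cancel_mat[OF _ _ s, of _ n]) (use h J in \<open>simp_all add: uminus_carrier_mat\<close>)
  also have "\<dots> \<longleftrightarrow> h * J = - (J * h)"
  proof
    assume e: "h * J * ?ht = - J"
    have "h * J = h * J * (?ht * h)" using hth right_mult_one_mat[OF hJ] by simp
    also have "\<dots> = (h * J * ?ht) * h" using assoc_mult_mat[OF hJ htc h] by simp
    also have "\<dots> = - (J * h)" unfolding e using J h by simp
    finally show "h * J = - (J * h)" .
  next
    assume e: "h * J = - (J * h)"
    have "h * J * ?ht = - (J * h) * ?ht" unfolding e ..
    also have "\<dots> = - (J * (h * ?ht))" using assoc_mult_mat[OF J h htc] by simp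
    also have "\<dots> = - J" using hht J by simp
    finally show "h * J * ?ht = - J" .
  qed
  finally show ?thesis .
qed

lemma J_construct:
  fixes T :: "real mat"
  assumes T: "T \<in> carrier_mat n n" and c2: "c^2 < 1"
    and TT: "\<forall>i<n. \<forall>j<n. (T * T) $$ (i,j) = 2 * c * T $$ (i,j) - (if i = j then 1 else 0)
     \<and> T $$ (j,i) = 2 * c * (if i = j then 1 else 0) - T $$ (i,j)"
  shows "\<exists>J s. J \<in> carrier_mat n n \<and> s \<noteq> 0 \<and> transpose_mat J = - J \<and> J * J = - 1\<^sub>m n
     \<and> T = c \<cdot>\<^sub>m 1\<^sub>m n + s \<cdot>\<^sub>m J \<and> transpose_mat T = c \<cdot>\<^sub>m 1\<^sub>m n + s \<cdot>\<^sub>m (- J)"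
proof -
  define s where "s = sqrt (1 - c^2)"
  have spos: "s > 0" using c2 by (simp add: s_def)
  have ss: "s * s = 1 - c^2" using c2 by (simp add: s_def)
  define d where "d i j = (if i = j then 1 else (0::real))" for i j :: nat
  have TT1: "\<And>i j. i < n \<Longrightarrow> j < n \<Longrightarrow> (T * T) $$ (i,j) = 2 * c * T $$ (i,j) - d i j"
    unfolding d_def using TT by blast
  have TT2: "\<And>i j. i < n \<Longrightarrow> j < n \<Longrightarrow> T $$ (j,i) = 2 * c * d i j - T $$ (i,j)"
    unfolding d_def using TT by blast
  define J where "J = mat n n (\<lambda>(i,j). (T $$ (i,j) - c * d i j) / s)"
  have Jc: "J \<in> carrier_mat n n" by (simp add: J_def)
  have Jt: "transpose_mat J = - J"
  proof (rule eq_matI)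
    fix i j assume "i < dim_row (- J)" "j < dim_col (- J)"
    then have i: "i < n" and j: "j < n" by (auto simp: J_def)
    have e: "T $$ (j,i) = 2 * c * d i j - T $$ (i,j)" by (rule TT2[OF i j])
    have dd: "d j i = d i j" by (auto simp: d_def)
    have "transpose_mat J $$ (i,j) = (T $$ (j,i) - c * d j i) / s" using i j by (simp add: J_def)
    also have "\<dots> = - ((T $$ (i,j) - c * d i j) / s)" unfolding e dd using spos by (simp add: field_simps)
    also have "\<dots> = (- J) $$ (i,j)" using i j by (simp add: J_def)
    finally show "transpose_mat J $$ (i,j) = (- J) $$ (i,j)" .
  qed (auto simp: J_def)
  have JJ: "J * J = - 1\<^sub>m n"
  proof (rule eq_matI)
    fix i j assume "i < dim_row (- 1\<^sub>m n :: real mat)" "j < dim_col (- 1\<^sub>m n :: real mat)"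
    then have i: "i < n" and j: "j < n" by auto
    have "(J * J) $$ (i,j) = (\<Sum>l = 0..<n. ((T $$ (i,l) - c * d i l) / s) * ((T $$ (l,j) - c * d l j) / s))"
      using i j by (simp add: J_def scalar_prod_def)
    also have "\<dots> = (\<Sum>l = 0..<n. (1 / (s * s)) * (T $$ (i,l) * T $$ (l,j) - c * (d i l * T $$ (l,j))
         - c * (T $$ (i,l) * d l j) + c^2 * (d i l * d l j)))"
      by (intro sum.cong refl) (use spos in \<open>simp add: field_simps power2_eq_square\<close>)
    also have "\<dots> = (1 / (s * s)) * (\<Sum>l = 0..<n. T $$ (i,l) * T $$ (l,j) - c * (d i l * T $$ (l,j))
         - c * (T $$ (i,l) * d l j) + c^2 * (d i l * d l j))"
      by (rule sum_distrib_left[symmetric])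
    also have "(\<Sum>l = 0..<n. T $$ (i,l) * T $$ (l,j) - c * (d i l * T $$ (l,j))
         - c * (T $$ (i,l) * d l j) + c^2 * (d i l * d l j)) =
        (\<Sum>l = 0..<n. T $$ (i,l) * T $$ (l,j)) - c * (\<Sum>l = 0..<n. d i l * T $$ (l,j))
         - c * (\<Sum>l = 0..<n. T $$ (i,l) * d l j) + c^2 * (\<Sum>l = 0..<n. d i l * d l j)"
      by (simp add: sum.distrib sum_subtractf sum_distrib_left)
    also have "(\<Sum>l = 0..<n. d i l * T $$ (l,j)) = T $$ (i,j)"
      using sum_delta_left[OF i, of 1 "\<lambda>l. T $$ (l,j)"] by (simp add: d_def)
    also have "(\<Sum>l = 0..<n. T $$ (i,l) * d l j) = T $$ (i,j)"
      using sum_delta_right[OF j, of "\<lambda>l. T $$ (i,l)" "\<lambda>_. 1"] by (simp add: d_def)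
    also have "(\<Sum>l = 0..<n. d i l * d l j) = d i j"
      using sum_delta_left[OF i, of 1 "\<lambda>l. d l j"] by (simp add: d_def)
    also have "(\<Sum>l = 0..<n. T $$ (i,l) * T $$ (l,j)) = (T * T) $$ (i,j)"
      using i j T by (simp add: scalar_prod_def)
    also have "(T * T) $$ (i,j) = 2 * c * T $$ (i,j) - d i j" by (rule TT1[OF i j])
    finally have "(J * J) $$ (i,j) = (1 / (s * s)) * ((c^2 - 1) * d i j)" by (simp add: algebra_simps)
    also have "\<dots> = - d i j"
    proof -
      have a: "c^2 - 1 = - (s * s)" using ss by simp
      have "(1 / (s * s)) * ((c^2 - 1) * d i j) = ((c^2 - 1) / (s * s)) * d i j" by simp
      also have "(c^2 - 1) / (s * s) = -1" unfolding a using spos by simp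
      finally show ?thesis by simp
    qed
    finally show "(J * J) $$ (i,j) = (- 1\<^sub>m n) $$ (i,j)" using i j by (simp add: d_def)
  qed (auto simp: J_def)
  have TJ: "T = c \<cdot>\<^sub>m 1\<^sub>m n + s \<cdot>\<^sub>m J"
  proof (rule eq_matI)
    fix i j assume "i < dim_row (c \<cdot>\<^sub>m 1\<^sub>m n + s \<cdot>\<^sub>m J)" "j < dim_col (c \<cdot>\<^sub>m 1\<^sub>m n + s \<cdot>\<^sub>m J)"
    then have i: "i < n" and j: "j < n" by (auto simp: J_def)
    have "(c \<cdot>\<^sub>m 1\<^sub>m n + s \<cdot>\<^sub>m J) $$ (i,j) = c * d i j + s * ((T $$ (i,j) - c * d i j) / s)"
      using i j by (simp add: J_def d_def)
    also have "\<dots> = T $$ (i,j)" using spos by simp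
    finally show "T $$ (i,j) = (c \<cdot>\<^sub>m 1\<^sub>m n + s \<cdot>\<^sub>m J) $$ (i,j)" by simp
  qed (use T in \<open>auto simp: J_def\<close>)
  have TtJ: "transpose_mat T = c \<cdot>\<^sub>m 1\<^sub>m n + s \<cdot>\<^sub>m (- J)"
  proof (rule eq_matI)
    fix i j assume "i < dim_row (c \<cdot>\<^sub>m 1\<^sub>m n + s \<cdot>\<^sub>m (- J))" "j < dim_col (c \<cdot>\<^sub>m 1\<^sub>m n + s \<cdot>\<^sub>m (- J))"
    then have i: "i < n" and j: "j < n" by (auto simp: J_def)
    have e: "T $$ (j,i) = 2 * c * d i j - T $$ (i,j)" by (rule TT2[OF i j])
    have "(c \<cdot>\<^sub>m 1\<^sub>m n + s \<cdot>\<^sub>m (- J)) $$ (i,j) = c * d i j - s * ((T $$ (i,j) - c * d i j) / s)"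
      using i j by (simp add: J_def d_def)
    also have "\<dots> = T $$ (j,i)"
    proof -
      have "s * ((T $$ (i,j) - c * d i j) / s) = T $$ (i,j) - c * d i j" using spos by simp
      then show ?thesis using e by (simp only:)
    qed
    also have "\<dots> = transpose_mat T $$ (i,j)" using i j T by simp
    finally show "transpose_mat T $$ (i,j) = (c \<cdot>\<^sub>m 1\<^sub>m n + s \<cdot>\<^sub>m (- J)) $$ (i,j)" by (rule sym)
  qed (use T in \<open>auto simp: J_def\<close>)
  have s0: "s \<noteq> 0" using spos by simp
  show ?thesis by (intro exI[of _ J] exI[of _ s] conjI; fact)
qed

lemma real_in_SO: assumes "T \<in> SO_mats n"
  shows "real_in (SO_group n) T \<longleftrightarrow> (\<exists>h \<in> SO_mats n. h * T * transpose_mat h = transpose_mat T)"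
proof -
  have "real_in (SO_group n) T \<longleftrightarrow> (\<exists>h \<in> SO_mats n. h * T * inv\<^bsub>SO_group n\<^esub> h = inv\<^bsub>SO_group n\<^esub> T)"
    unfolding real_in_def by (simp add: SO_group_def)
  also have "\<dots> \<longleftrightarrow> (\<exists>h \<in> SO_mats n. h * T * transpose_mat h = transpose_mat T)"
  proof (rule bex_cong[OF refl])
    fix h assume "h \<in> SO_mats n"
    then show "h * T * inv\<^bsub>SO_group n\<^esub> h = inv\<^bsub>SO_group n\<^esub> T \<longleftrightarrow> h * T * transpose_mat h = transpose_mat T"
      using SO_inv[of h n] SO_inv[OF assms] by (simp only:)
  qed
  finally show ?thesis .
qed

theorem lemma3p3:
  fixes n :: nat and T :: "real mat"
  assumes "even n"
    and "T \<in> SO_mats n"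
    and "\<exists>q :: real poly. \<exists>k :: nat. irreducible q \<and> degree q = 2 \<and> is_min_poly n T (q ^ k)"
  shows "real_in (SO_group n) T \<longleftrightarrow> n mod 4 \<noteq> 2"
proof -
  obtain q :: "real poly" and k where irr: "irreducible q" and deg: "degree q = 2" and mp: "is_min_poly n T (q ^ k)"
    using assms(3) by blast
  have Tc: "T \<in> carrier_mat n n" using assms(2) by (simp add: SO_mats_def)
  show ?thesis
  proof (cases "n = 0")
    case True
    have "T * T * transpose_mat T = transpose_mat T" using Tc True by (intro eq_matI) auto
    then have "real_in (SO_group n) T" using real_in_SO[OF assms(2)] assms(2) by blast
    then show ?thesis using True by simp
  next
    case False
    then have n: "n > 0" by simp
    obtain c where c2: "c^2 < 1" and TT: "\<forall>i<n. \<forall>j<n. (T * T) $$ (i,j) = 2 * c * T $$ (i,j) - (if i = j then 1 else 0)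
       \<and> T $$ (j,i) = 2 * c * (if i = j then 1 else 0) - T $$ (i,j)"
      using structure_lemma[OF n assms(2) irr deg mp] by blast
    obtain J s where Jc: "J \<in> carrier_mat n n" and s: "s \<noteq> 0" and Jt: "transpose_mat J = - J"
      and JJ: "J * J = - 1\<^sub>m n" and TJ: "T = c \<cdot>\<^sub>m 1\<^sub>m n + s \<cdot>\<^sub>m J"
      and TtJ: "transpose_mat T = c \<cdot>\<^sub>m 1\<^sub>m n + s \<cdot>\<^sub>m (- J)"
      using J_construct[OF Tc c2 TT] by blast
    obtain g where gc: "g \<in> carrier_mat n n" and ggt: "g * transpose_mat g = 1\<^sub>m n"
      and gJ: "g * J = - (J * g)" and dg: "det g = (-1) ^ (n div 2)"
      using exists_g[OF Jc Jt JJ assms(1)] by blast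
    have gtc: "transpose_mat g \<in> carrier_mat n n" using gc by simp
    have gtg: "transpose_mat g * g = 1\<^sub>m n" by (rule mat_mult_left_right_inverse[OF gc gtc ggt])
    have crit: "\<And>h. h \<in> SO_mats n \<Longrightarrow> h * T * transpose_mat h = transpose_mat T \<longleftrightarrow> h * J = - (J * h)"
    proof -
      fix h assume h: "h \<in> SO_mats n"
      have hc: "h \<in> carrier_mat n n" and hht: "h * transpose_mat h = 1\<^sub>m n" using h by (auto simp: SO_mats_def)
      show "h * T * transpose_mat h = transpose_mat T \<longleftrightarrow> h * J = - (J * h)"
        by (rule criterion[OF Tc Jc hc s hht SO_transpose(2)[OF h] TJ TtJ])
    qed
    have real_iff: "real_in (SO_group n) T \<longleftrightarrow> (\<exists>h \<in> SO_mats n. h * J = - (J * h))"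
      using real_in_SO[OF assms(2)] crit by (simp only: Bex_def) blast
    show ?thesis
    proof
      assume "real_in (SO_group n) T"
      then obtain h where h: "h \<in> SO_mats n" and hJ: "h * J = - (J * h)" using real_iff by blast
      have hc: "h \<in> carrier_mat n n" and dh: "det h = 1" using h by (auto simp: SO_mats_def)
      define m where "m = transpose_mat g * h"
      have mc: "m \<in> carrier_mat n n" using gtc hc by (simp add: m_def)
      have gtJ: "transpose_mat g * J = - (J * transpose_mat g)"
      proof -
        have "transpose_mat (g * J) = transpose_mat (- (J * g))" using gJ by simp
        then have "transpose_mat J * transpose_mat g = - (transpose_mat g * transpose_mat J)"
          using gc Jc by (simp add: transpose_mult[OF gc Jc] transpose_mult[OF Jc gc] transpose_uminus)
        then show ?thesis using Jt Jc gc by simp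
      qed
      have mJ: "m * J = J * m"
      proof -
        have "m * J = transpose_mat g * (h * J)" unfolding m_def by (rule assoc_mult_mat[OF gtc hc Jc])
        also have "\<dots> = - ((transpose_mat g * J) * h)"
          unfolding hJ using gtc Jc hc by (simp add: assoc_mult_mat[OF gtc Jc hc])
        also have "\<dots> = (J * transpose_mat g) * h" unfolding gtJ using gtc Jc hc by simp
        also have "\<dots> = J * m" unfolding m_def by (rule assoc_mult_mat[OF Jc gtc hc])
        finally show ?thesis .
      qed
      have "det m \<ge> 0" by (rule det_commuting_nonneg[OF mc Jc mJ JJ])
      moreover have "det m = (-1) ^ (n div 2)"
        unfolding m_def using det_mult[OF gtc hc] det_transpose[OF gc] dg dh by simp
      ultimately have "even (n div 2)"
      proof (rule_tac ccontr)
        assume "0 \<le> det m" "det m = (-1) ^ (n div 2)" "odd (n div 2)"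
        then show False by simp
      qed
      then show "n mod 4 \<noteq> 2" using assms(1) by presburger
    next
      assume "n mod 4 \<noteq> 2"
      then have "even (n div 2)" using assms(1) by presburger
      then have "det g = 1" using dg by simp
      then have "g \<in> SO_mats n" using gc ggt by (simp add: SO_mats_def)
      then show "real_in (SO_group n) T" using real_iff gJ by blast
    qed
  qed
qed

end
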